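(* Let $A_1=(1,0,-1)^8$ and $A_2=(0,1,-1,-1,3,-2,-2,5,-3,-3,7,-4,-4,9,-5,-5,11,-6,-6,13,-7,-7,15,-8)$ in $\mathbb{Z}^{24}$, let $a_1,a_2$ be integers, $A=a_1A_1+a_2A_2$, and let $m$ be an odd positive integer with $\gcd(a_1,a_2,m)=1$ and $\gcd(a_2,m)\in\{1,3\}$. Then the triangle $\nabla\big(\mathrm{IAP}(\pi_m(A),\pi_m(A)X_{24})[3\lambda m]\big)$ is balanced in $\mathbb{Z}/m\mathbb{Z}$ for every non-negative integer $\lambda$.
   Context: $\pi_m$ is reduction mod $m$; tuples are row vectors; $X_{24}=(\delta_{r,s}+\delta_{r,25-s})_{1\le r,s\le24}$. For $24$-tuples $A=(a_0,\dots,a_{23})$, $D=(d_0,\dots,d_{23})$, $\mathrm{IAP}(A,D)=(u_j)_{j\in\mathbb{Z}}$ with $u_{24q+r}=a_r+qd_r$. For a sequence $S=(u_j)_{j\in\mathbb{Z}}$, $S[n]=(u_0,\dots,u_{n-1})$. For a finite sequence $(u_0,\dots,u_{n-1})$, the triangle $\nabla(u_0,\dots,u_{n-1})$ is $(a_{i,j})_{i,j\ge0,i+j<n}$ with $a_{0,j}=u_j$ and $a_{i,j}=-a_{i-1,j}-a_{i-1,j+1}$ for $i\ge1$; it is balanced if every element of $\mathbb{Z}/m\mathbb{Z}$ occurs the same number of times among its entries. *)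

theory Defs
  imports Main
begin

text \<open>24-tuples are represented as functions on the indices 0..23 (0-based).\<close>

definition A1 :: "nat \<Rightarrow> int" where
  "A1 r = [1, 0, -1] ! (r mod 3)"

definition A2 :: "nat \<Rightarrow> int" where
  "A2 r = [0, 1, -1, -1, 3, -2, -2, 5, -3, -3, 7, -4, -4, 9, -5, -5, 11, -6, -6, 13, -7, -7, 15, -8] ! r"

definition red :: "int \<Rightarrow> (nat \<Rightarrow> int) \<Rightarrow> nat \<Rightarrow> int" where
  "red m v r = v r mod m"

text \<open>row vector times X_24 (0-based): (v X)_s = v_s + v_(23-s); computed mod m\<close>
definition timesX :: "int \<Rightarrow> (nat \<Rightarrow> int) \<Rightarrow> nat \<Rightarrow> int" where
  "timesX m v s = (v s + v (23 - s)) mod m"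

text \<open>IAP(A,D): u_(24q+r) = a_r + q d_r (only non-negative indices are needed for S[n])\<close>
definition IAP :: "(nat \<Rightarrow> int) \<Rightarrow> (nat \<Rightarrow> int) \<Rightarrow> nat \<Rightarrow> int" where
  "IAP a d j = a (j mod 24) + int (j div 24) * d (j mod 24)"

text \<open>triangle entries a_(i,j), computed over the integers (reduction mod m commutes)\<close>
fun tri :: "(nat \<Rightarrow> int) \<Rightarrow> nat \<Rightarrow> nat \<Rightarrow> int" where
  "tri u 0 j = u j"
| "tri u (Suc i) j = - tri u i j - tri u i (Suc j)"

definition balanced :: "int \<Rightarrow> (nat \<Rightarrow> int) \<Rightarrow> nat \<Rightarrow> bool" where
  "balanced m u n = (\<forall>x\<in>{0..<m}. \<forall>y\<in>{0..<m}.
     card {(i, j). i + j < n \<and> tri u i j mod m = x}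
   = card {(i, j). i + j < n \<and> tri u i j mod m = y})"

end

theory Submission
  imports Defs
begin

definition G1 :: "nat \<Rightarrow> nat \<Rightarrow> int" where
  "G1 i j = (if (int i - int j) mod 3 = 0 then 1 else if (int i + 2 * int j + 1) mod 3 = 0 then 0 else -1)"
definition G2 :: "nat \<Rightarrow> nat \<Rightarrow> int" where
  "G2 i j = (if (int i - int j) mod 3 = 0 then (int i - int j) div 3
     else if (int i + 2 * int j + 1) mod 3 = 0 then (int i + 2 * int j + 1) div 3
     else (-1 - 2 * int i - int j) div 3)"

lemma G_rec: "G1 (Suc i) j = - G1 i j - G1 i (Suc j) \<and> G2 (Suc i) j = - G2 i j - G2 i (Suc j)"
proof -
  define J where "J = int j"
  define k where "k = (int i - int j) div 3"
  define t where "t = (int i - int j) mod 3"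
  have I: "int i = 3 * k + t + J" unfolding k_def t_def J_def by simp
  have "t = 0 \<or> t = 1 \<or> t = 2" unfolding t_def by presburger
  then show ?thesis
  proof (elim disjE)
    assume t: "t = 0"
    have e: "int (Suc i) - int j = 3 * k + 1" "int i - int j = 3 * k" "int i - int (Suc j) = 3 * (k - 1) + 2"
      "int (Suc i) + 2 * int j + 1 = 3 * (k + J) + 2" "int i + 2 * int (Suc j) + 1 = 3 * (k + J + 1)"
      "-1 - 2 * int (Suc i) - int j = 3 * (- 1 - 2 * k - J)"
      using I t J_def by simp_all
    show ?thesis unfolding G1_def G2_def e by (simp; presburger)
  next
    assume t: "t = 1"
    have e: "int (Suc i) - int j = 3 * k + 2" "int i - int j = 3 * k + 1" "int i - int (Suc j) = 3 * k"
      "int (Suc i) + 2 * int j + 1 = 3 * (k + J + 1)" "int i + 2 * int j + 1 = 3 * (k + J) + 2"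
      "-1 - 2 * int i - int j = 3 * (- 1 - 2 * k - J)"
      using I t J_def by simp_all
    show ?thesis unfolding G1_def G2_def e by (simp; presburger)
  next
    assume t: "t = 2"
    have e: "int (Suc i) - int j = 3 * (k + 1)" "int i - int j = 3 * k + 2" "int i - int (Suc j) = 3 * k + 1"
      "int i + 2 * int j + 1 = 3 * (k + J + 1)" "int i + 2 * int (Suc j) + 1 = 3 * (k + J + 1) + 2"
      "-1 - 2 * int i - int (Suc j) = 3 * (- 2 - 2 * k - J)"
      using I t J_def by simp_all
    show ?thesis unfolding G1_def G2_def e by (simp; presburger)
  qed
qed

lemma G_0a: "G1 0 (3*k) = 1 \<and> G2 0 (3*k) = - int k"
  unfolding G1_def G2_def by simp
lemma G_0b: "G1 0 (3*k+1) = 0 \<and> G2 0 (3*k+1) = 2 * int k + 1"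
proof -
  have a: "(- 1 - 3 * int k) mod 3 = 2" by presburger
  have b: "(3 + 6 * int k) mod 3 = 0" by presburger
  have c: "(3 + 6 * int k) div 3 = 1 + 2 * int k" by presburger
  show ?thesis unfolding G1_def G2_def by (simp add: a b c)
qed
lemma G_0c: "G1 0 (3*k+2) = -1 \<and> G2 0 (3*k+2) = - int k - 1"
proof -
  have a: "(- 2 - 3 * int k) mod 3 = 1" by presburger
  have b: "(5 + 6 * int k) mod 3 = 2" by presburger
  have c: "(-3 - 3 * int k) div 3 = - 1 - int k" by presburger
  show ?thesis unfolding G1_def G2_def by (simp add: a b c)
qed

lemma lt8: "(p::nat) < 8 \<Longrightarrow> p = 0 \<or> p = 1 \<or> p = 2 \<or> p = 3 \<or> p = 4 \<or> p = 5 \<or> p = 6 \<or> p = 7"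
  by presburger

lemma A2c0: "p < 8 \<Longrightarrow> A2 (3*p) = - int p \<and> A2 (23 - 3*p) = int p - 8"
  by (drule lt8, elim disjE) (simp_all add: A2_def)
lemma A2c1: "p < 8 \<Longrightarrow> A2 (3*p+1) = 2 * int p + 1 \<and> A2 (23 - (3*p+1)) = 15 - 2 * int p"
  by (drule lt8, elim disjE) (simp_all add: A2_def)
lemma A2c2: "p < 8 \<Longrightarrow> A2 (3*p+2) = - int p - 1 \<and> A2 (23 - (3*p+2)) = int p - 7"
  by (drule lt8, elim disjE) (simp_all add: A2_def)

lemma m3: "(3*x + b) mod 3 = b mod (3::nat)" by simp

lemma A_init: assumes "r < 24"
  shows "A1 r + int q * (A1 r + A1 (23 - r)) = G1 0 (24 * q + r) \<and>
         A2 r + int q * (A2 r + A2 (23 - r)) = G2 0 (24 * q + r)"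
proof -
  define p where "p = r div 3"
  define c where "c = r mod 3"
  have r: "r = 3 * p + c" and c: "c < 3" and p: "p < 8" using assms unfolding p_def c_def by simp_all
  have "c = 0 \<or> c = 1 \<or> c = 2" using c by presburger
  then show ?thesis
  proof (elim disjE)
    assume "c = 0"
    from \<open>c = 0\<close> have e: "24 * q + r = 3 * (8 * q + p)" "23 - r = 3 * (7 - p) + 2" "r = 3 * p" using r p by simp_all
    have mm: "r mod 3 = 0" "(23 - r) mod 3 = 2" by (simp add: e(3), subst e(2), simp only: m3, simp)
    have v1: "A1 r = 1" "A1 (23 - r) = -1" by (simp_all add: A1_def mm)
    have v: "A2 r = - int p" "A2 (23 - r) = int p - 8"
       "G1 0 (24 * q + r) = 1" "G2 0 (24 * q + r) = - int (8 * q + p)"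
      using A2c0[OF p] G_0a[of "8*q+p"] unfolding e by simp_all
    show ?thesis unfolding v v1 by (simp add: algebra_simps)
  next
    assume "c = 1"
    from \<open>c = 1\<close> have e: "24 * q + r = 3 * (8 * q + p) + 1" "23 - r = 3 * (7 - p) + 1" "r = 3 * p + 1" using r p by simp_all
    have mm: "r mod 3 = 1" "(23 - r) mod 3 = 1" by (simp add: e(3), subst e(2), simp only: m3, simp)
    have v1: "A1 r = 0" "A1 (23 - r) = 0" by (simp_all add: A1_def mm)
    have v: "A2 r = 2 * int p + 1" "A2 (23 - r) = 15 - 2 * int p"
       "G1 0 (24 * q + r) = 0" "G2 0 (24 * q + r) = 2 * int (8 * q + p) + 1"
      using A2c1[OF p] G_0b[of "8*q+p"] unfolding e by simp_all
    show ?thesis unfolding v v1 by (simp add: algebra_simps)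
  next
    assume "c = 2"
    from \<open>c = 2\<close> have e: "24 * q + r = 3 * (8 * q + p) + 2" "23 - r = 3 * (7 - p)" "r = 3 * p + 2" using r p by simp_all
    have mm: "r mod 3 = 2" "(23 - r) mod 3 = 0" using e(3) m3[of p 2] e(2) by simp_all
    have v1: "A1 r = -1" "A1 (23 - r) = 1" by (simp_all add: A1_def mm)
    have v: "A2 r = - int p - 1" "A2 (23 - r) = int p - 7"
       "G1 0 (24 * q + r) = -1" "G2 0 (24 * q + r) = - int (8 * q + p) - 1"
      using A2c2[OF p] G_0c[of "8*q+p"] unfolding e by simp_all
    show ?thesis unfolding v v1 by (simp add: algebra_simps)
  qed
qed

definition FF :: "int \<Rightarrow> int \<Rightarrow> nat \<Rightarrow> nat \<Rightarrow> int" where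
  "FF a1 a2 i j = a1 * G1 i j + a2 * G2 i j"

lemma tri_F:
  fixes a1 a2 m :: int
  defines "A \<equiv> (\<lambda>r. a1 * A1 r + a2 * A2 r)"
  shows "m dvd (tri (IAP (red m A) (timesX m (red m A))) i j - FF a1 a2 i j)"
proof (induction i arbitrary: j)
  case 0
  define r where "r = j mod 24"
  define q where "q = j div 24"
  have j: "j = 24 * q + r" and r: "r < 24" unfolding r_def q_def by simp_all
  have F: "FF a1 a2 0 j = A r + int q * (A r + A (23 - r))"
  proof -
    have e1: "A1 r + int q * (A1 r + A1 (23 - r)) = G1 0 (24 * q + r)"
     and e2: "A2 r + int q * (A2 r + A2 (23 - r)) = G2 0 (24 * q + r)" using A_init[OF r, of q] by simp_all
    show ?thesis unfolding FF_def j e1[symmetric] e2[symmetric] A_def by (simp add: algebra_simps)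
  qed
  have u: "IAP (red m A) (timesX m (red m A)) j = A r mod m + int q * ((A r mod m + A (23 - r) mod m) mod m)"
    unfolding IAP_def red_def timesX_def r_def q_def by simp
  have "(A r mod m + int q * ((A r mod m + A (23 - r) mod m) mod m)) mod m = (A r + int q * (A r + A (23 - r))) mod m"
    by (simp add: mod_simps, metis mod_add_right_eq mod_mult_right_eq)
  then show ?case unfolding F by (simp add: u mod_eq_dvd_iff)
next
  case (Suc i)
  have g1: "G1 (Suc i) j = - G1 i j - G1 i (Suc j)" and g2: "G2 (Suc i) j = - G2 i j - G2 i (Suc j)"
    using G_rec[of i j] by simp_all
  have "tri (IAP (red m A) (timesX m (red m A))) (Suc i) j - FF a1 a2 (Suc i) j =
     - (tri (IAP (red m A) (timesX m (red m A))) i j - FF a1 a2 i j)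
     - (tri (IAP (red m A) (timesX m (red m A))) i (Suc j) - FF a1 a2 i (Suc j))"
    unfolding FF_def g1 g2 by (simp add: algebra_simps)
  note eq = this
  show ?case unfolding eq
    by (rule dvd_diff[OF dvd_minus_iff[THEN iffD2]]) (rule Suc.IH, rule Suc.IH)
qed

definition SS :: "int \<Rightarrow> nat \<Rightarrow> int \<Rightarrow> (nat \<times> nat) set" where
  "SS M n d = {(i,j). i + j < n \<and> (int i - int j) mod M = d}"

definition rc :: "int \<Rightarrow> nat \<Rightarrow> nat \<Rightarrow> int \<Rightarrow> nat" where
  "rc M i l d = card {j. j < l \<and> (int i - int j) mod M = d}"

lemma card_rows: "card {(i,j). i + j < (n::nat) \<and> P i j} = (\<Sum>i<n. card {j. j < n - i \<and> P i j})"
proof -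
  have "{(i,j). i + j < n \<and> P i j} = Sigma {..<n} (\<lambda>i. {j. j < n - i \<and> P i j})" by auto
  then show ?thesis by simp
qed

lemma SS_rows: "card (SS M n d) = (\<Sum>i<n. rc M i (n - i) d)"
  unfolding SS_def rc_def by (rule card_rows)

lemma seg1:
  assumes M: "M > 0" and d: "0 \<le> d" "d < M"
  shows "card {j. a \<le> j \<and> j < a + nat M \<and> (int i - int j) mod M = d} = 1"
proof -
  define j0 where "j0 = a + nat ((int i - int a - d) mod M)"
  have r0: "0 \<le> (int i - int a - d) mod M" "(int i - int a - d) mod M < M" using M by simp_all
  have "{j. a \<le> j \<and> j < a + nat M \<and> (int i - int j) mod M = d} = {j0}"
  proof (intro set_eqI iffI)
    fix j assume "j \<in> {j. a \<le> j \<and> j < a + nat M \<and> (int i - int j) mod M = d}"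
    then have j: "a \<le> j" "j < a + nat M" "(int i - int j) mod M = d" by auto
    have j0': "(int i - int j0) mod M = d"
    proof -
      have "int i - int j0 = (int i - int a - d) - (int i - int a - d) mod M + d"
        unfolding j0_def using r0 by simp
      also have "\<dots> = M * ((int i - int a - d) div M) + d" by (simp add: div_mult_mod_eq minus_mod_eq_mult_div)
      finally show ?thesis using d by simp
    qed
    have "(int i - int j) mod M = (int i - int j0) mod M" using j j0' by simp
    then have "M dvd (int j0 - int j)" by (simp add: mod_eq_dvd_iff)
    moreover have "\<bar>int j0 - int j\<bar> < M"
    proof -
      have "int a \<le> int j0" "int j0 < int a + M" using r0 unfolding j0_def by simp_all
      moreover have "int a \<le> int j" "int j < int a + M" using j M by simp_all
      ultimately show ?thesis by linarith
    qed
    ultimately have "int j0 - int j = 0" using dvd_imp_le_int[of "int j0 - int j" M] by fastforce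
    then show "j \<in> {j0}" by simp
  next
    fix j assume "j \<in> {j0}"
    then have jj: "j = j0" by simp
    have "int i - int j0 = (int i - int a - d) - (int i - int a - d) mod M + d"
      unfolding j0_def using r0 by simp
    also have "\<dots> = M * ((int i - int a - d) div M) + d" by (simp add: minus_mod_eq_mult_div)
    finally have "(int i - int j0) mod M = d" using d by simp
    then show "j \<in> {j. a \<le> j \<and> j < a + nat M \<and> (int i - int j) mod M = d}"
      unfolding jj using r0 unfolding j0_def by auto
  qed
  then show ?thesis by simp
qed

lemma rc_add:
  assumes M: "M > 0" and d: "0 \<le> d" "d < M"
  shows "rc M i (l + nat M) d = rc M i l d + 1"
proof -
  have "{j. j < l + nat M \<and> (int i - int j) mod M = d} =
        {j. j < l \<and> (int i - int j) mod M = d} \<union> {j. l \<le> j \<and> j < l + nat M \<and> (int i - int j) mod M = d}"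
    by auto
  moreover have "card ({j. j < l \<and> (int i - int j) mod M = d} \<union> {j. l \<le> j \<and> j < l + nat M \<and> (int i - int j) mod M = d})
     = card {j. j < l \<and> (int i - int j) mod M = d} + card {j. l \<le> j \<and> j < l + nat M \<and> (int i - int j) mod M = d}"
    by (rule card_Un_disjoint) auto
  ultimately show ?thesis unfolding rc_def using seg1[OF M d, of l i] by simp
qed

lemma rc_shift:
  assumes "M dvd int n"
  shows "rc M (n + i) l d = rc M i l d"
proof -
  obtain k where k: "int n = M * k" using assms by auto
  have "\<And>j. (int (n + i) - int j) mod M = (int i - int j) mod M"
  proof -
    fix j
    have "int (n + i) - int j = (int i - int j) + k * M" using k by simp
    then show "(int (n + i) - int j) mod M = (int i - int j) mod M" by (subst \<open>int (n + i) - int j = _\<close>) (rule mod_mult_self1)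
  qed
  then show ?thesis unfolding rc_def by simp
qed

lemma strip:
  assumes M: "M > 0" and d: "0 \<le> d" "d < M" and n: "M dvd int n"
  shows "card (SS M (n + nat M) d) = card (SS M n d) + n + card (SS M (nat M) d)"
proof -
  define N where "N = nat M"
  define f where "f i = rc M i (n + N - i) d" for i
  have "card (SS M (n + N) d) = sum f {0..<n + N}"
    unfolding SS_rows f_def atLeast0LessThan by simp
  also have "\<dots> = sum f {0..<n} + sum f {n..<n + N}"
    by (rule sum.atLeastLessThan_concat[symmetric]) simp_all
  also have "sum f {n..<n + N} = sum (\<lambda>i. f (i + n)) {0..<N}"
    using sum.shift_bounds_nat_ivl[of f 0 n N] by (simp add: add.commute)
  also have "\<dots> = (\<Sum>i<N. rc M i (N - i) d)"
    unfolding f_def atLeast0LessThan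
    by (rule sum.cong) (simp_all add: rc_shift[OF n, of _ "N - _" d, unfolded add.commute[of n]] add.commute)
  also have "\<dots> = card (SS M N d)" unfolding SS_rows ..
  also have "sum f {0..<n} = (\<Sum>i<n. rc M i (n - i) d + 1)"
    unfolding f_def atLeast0LessThan
  proof (rule sum.cong)
    fix i assume "i \<in> {..<n}"
    then have "n + N - i = (n - i) + nat M" unfolding N_def by simp
    then show "rc M i (n + N - i) d = rc M i (n - i) d + 1" using rc_add[OF M d] by simp
  qed simp
  also have "\<dots> = card (SS M n d) + n" unfolding SS_rows sum.distrib by simp
  finally show ?thesis unfolding N_def by simp
qed

lemma card_half: "card {j::nat. 2 * int j + e < M} = nat ((M - e + 1) div 2)"
proof -
  have "{j::nat. 2 * int j + e < M} = {..< nat ((M - e + 1) div 2)}" by auto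
  then show ?thesis by simp
qed

lemma finite_SS: "finite (SS M n d)"
proof -
  have "SS M n d \<subseteq> {..<n} \<times> {..<n}" unfolding SS_def by auto
  then show ?thesis by (rule finite_subset) simp
qed

lemma base:
  assumes M: "M > 0" "odd M" and d: "0 \<le> d" "d < M"
  shows "card (SS M (nat M) d) = nat ((M + 1) div 2)"
proof -
  define Lp where "Lp = (\<lambda>j. (j + nat d, j)) ` {j::nat. 2 * int j + d < M}"
  define Ln where "Ln = (\<lambda>i. (i, i + nat (M - d))) ` {i::nat. 2 * int i + 0 < d}"
  have eq: "SS M (nat M) d = Lp \<union> Ln"
  proof (intro set_eqI iffI)
    fix p assume "p \<in> SS M (nat M) d"
    then obtain i j where p: "p = (i, j)" and ij: "i + j < nat M" and md: "(int i - int j) mod M = d"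
      unfolding SS_def by auto
    show "p \<in> Lp \<union> Ln"
    proof (cases "j \<le> i")
      case True
      then have "(int i - int j) mod M = int i - int j" using ij by (intro mod_pos_pos_trivial) auto
      then have "int i = int j + d" using md by simp
      then have "i = j + nat d" "2 * int j + d < M" using ij d by auto
      then show ?thesis unfolding p Lp_def by auto
    next
      case False
      have "(int i - int j) mod M = (int i - int j + M) mod M" by simp
      also have "\<dots> = int i - int j + M" using ij False by (intro mod_pos_pos_trivial) auto
      finally have "int j = int i + (M - d)" using md by simp
      then have "j = i + nat (M - d)" "2 * int i + 0 < d" using ij d by auto
      then show ?thesis unfolding p Ln_def by auto
    qed
  next
    fix p assume "p \<in> Lp \<union> Ln"
    then show "p \<in> SS M (nat M) d"
    proof
      assume "p \<in> Lp"
      then obtain j where p: "p = (j + nat d, j)" and j: "2 * int j + d < M" unfolding Lp_def by auto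
      have "(int (j + nat d) - int j) mod M = d" using d by simp
      moreover have "j + nat d + j < nat M" using j d by linarith
      ultimately show ?thesis unfolding p SS_def by simp
    next
      assume "p \<in> Ln"
      then obtain i where p: "p = (i, i + nat (M - d))" and i: "2 * int i + 0 < d" unfolding Ln_def by auto
      have "(int i - int (i + nat (M - d))) mod M = (d + (-1) * M) mod M" using d by simp
      also have "\<dots> = d" using d by simp
      finally have "(int i - int (i + nat (M - d))) mod M = d" .
      moreover have "i + (i + nat (M - d)) < nat M" using i d by linarith
      ultimately show ?thesis unfolding p SS_def by simp
    qed
  qed
  have disj: "Lp \<inter> Ln = {}" unfolding Lp_def Ln_def using d by auto
  have cLp: "card Lp = nat ((M - d + 1) div 2)"
    unfolding Lp_def by (subst card_image) (auto intro: inj_onI simp: card_half)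
  have cLn: "card Ln = nat ((d + 1) div 2)"
    unfolding Ln_def by (subst card_image) (auto intro: inj_onI simp: card_half[of 0 d, simplified])
  have fin: "finite Lp" "finite Ln" using finite_SS[of M "nat M" d] eq by (auto intro: finite_subset)
  have "card (SS M (nat M) d) = nat ((M - d + 1) div 2) + nat ((d + 1) div 2)"
    unfolding eq using card_Un_disjoint[OF fin disj] cLp cLn by simp
  also have "\<dots> = nat ((M + 1) div 2)"
  proof -
    obtain k where k: "M = 2 * k + 1" using M(2) by (auto elim: oddE)
    have "(M - d + 1) div 2 + (d + 1) div 2 = (M + 1) div 2" "0 \<le> (M - d + 1) div 2" "0 \<le> (d + 1) div 2"
      using k d by presburger+
    then show ?thesis by (metis nat_add_distrib)
  qed
  finally show ?thesis .
qed

lemma E_const: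
  assumes M: "M > 0" "odd M" and d: "0 \<le> d" "d < M"
  shows "card (SS M (l * nat M) d) = card (SS M (l * nat M) 0)"
proof (induction l)
  case 0
  then show ?case unfolding SS_def by simp
next
  case (Suc l)
  have dv: "M dvd int (l * nat M)" using M by simp
  have e: "Suc l * nat M = l * nat M + nat M" by simp
  show ?case unfolding e strip[OF M(1) d dv] strip[where d=0, OF M(1) order.refl M(1) dv] Suc
    base[OF M d] base[OF M order.refl M(1)] by simp
qed

lemma modn: "M dvd int n \<Longrightarrow> (x + int n) mod M = x mod M" "M dvd int n \<Longrightarrow> (x - int n) mod M = x mod M"
  by (simp_all add: mod_eq_dvd_iff)

definition B1 :: "int \<Rightarrow> nat \<Rightarrow> int \<Rightarrow> (nat \<times> nat) set" where
  "B1 M n d = {(i,j). i + j < n \<and> (int i + 2 * int j + 1) mod M = d}"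
definition B2 :: "int \<Rightarrow> nat \<Rightarrow> int \<Rightarrow> (nat \<times> nat) set" where
  "B2 M n d = {(i,j). i + j < n \<and> (-1 - 2 * int i - int j) mod M = d}"

lemma finite_B: "finite (B1 M n d)" "finite (B2 M n d)"
proof -
  have "B1 M n d \<subseteq> {..<n} \<times> {..<n}" "B2 M n d \<subseteq> {..<n} \<times> {..<n}" unfolding B1_def B2_def by auto
  then show "finite (B1 M n d)" "finite (B2 M n d)" by (auto intro: finite_subset)
qed

lemma card_B1:
  assumes n: "M dvd int n"
  shows "card (B1 M n d) = card (SS M n d)"
proof (rule sym, rule card_bij_eq[of "\<lambda>(i,j). (n - Suc (i+j), i)" _ _ "\<lambda>(i,j). (j, n - Suc (i+j))"])
  show "inj_on (\<lambda>(i,j). (n - Suc (i+j), i)) (SS M n d)"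
    unfolding SS_def by (rule inj_onI) auto
  show "inj_on (\<lambda>(i,j). (j, n - Suc (i+j))) (B1 M n d)"
    unfolding B1_def by (rule inj_onI) auto
  show "(\<lambda>(i,j). (n - Suc (i+j), i)) ` SS M n d \<subseteq> B1 M n d"
  proof clarify
    fix i j assume "(i, j) \<in> SS M n d"
    then have ij: "i + j < n" and md: "(int i - int j) mod M = d" unfolding SS_def by auto
    have eq: "int (n - Suc (i + j)) + 2 * int i + 1 = (int i - int j) + int n" using ij by simp
    have "(int (n - Suc (i + j)) + 2 * int i + 1) mod M = d" unfolding eq modn[OF n] md ..
    moreover have "(n - Suc (i + j)) + (i) < n" using ij by arith
    ultimately show "(n - Suc (i + j), i) \<in> B1 M n d" unfolding B1_def mem_Collect_eq prod.case by blast
  qed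
  show "(\<lambda>(i,j). (j, n - Suc (i+j))) ` B1 M n d \<subseteq> SS M n d"
  proof clarify
    fix i j assume "(i, j) \<in> B1 M n d"
    then have ij: "i + j < n" and md: "(int i + 2 * int j + 1) mod M = d" unfolding B1_def by auto
    have eq: "int j - int (n - Suc (i + j)) = (int i + 2 * int j + 1) - int n" using ij by simp
    have "(int j - int (n - Suc (i + j))) mod M = d" unfolding eq modn[OF n] md ..
    moreover have "(j) + (n - Suc (i + j)) < n" using ij by arith
    ultimately show "(j, n - Suc (i + j)) \<in> SS M n d" unfolding SS_def mem_Collect_eq prod.case by blast
  qed
qed (simp_all add: finite_SS finite_B)

lemma card_B2:
  assumes n: "M dvd int n"
  shows "card (B2 M n d) = card (SS M n d)"
proof (rule sym, rule card_bij_eq[of "\<lambda>(i,j). (j, n - Suc (i+j))" _ _ "\<lambda>(i,j). (n - Suc (i+j), i)"])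
  show "inj_on (\<lambda>(i,j). (j, n - Suc (i+j))) (SS M n d)"
    unfolding SS_def by (rule inj_onI) auto
  show "inj_on (\<lambda>(i,j). (n - Suc (i+j), i)) (B2 M n d)"
    unfolding B2_def by (rule inj_onI) auto
  show "(\<lambda>(i,j). (j, n - Suc (i+j))) ` SS M n d \<subseteq> B2 M n d"
  proof clarify
    fix i j assume "(i, j) \<in> SS M n d"
    then have ij: "i + j < n" and md: "(int i - int j) mod M = d" unfolding SS_def by auto
    have eq: "-1 - 2 * int j - int (n - Suc (i + j)) = (int i - int j) - int n" using ij by simp
    have "(-1 - 2 * int j - int (n - Suc (i + j))) mod M = d" unfolding eq modn[OF n] md ..
    moreover have "(j) + (n - Suc (i + j)) < n" using ij by arith
    ultimately show "(j, n - Suc (i + j)) \<in> B2 M n d" unfolding B2_def mem_Collect_eq prod.case by blast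
  qed
  show "(\<lambda>(i,j). (n - Suc (i+j), i)) ` B2 M n d \<subseteq> SS M n d"
  proof clarify
    fix i j assume "(i, j) \<in> B2 M n d"
    then have ij: "i + j < n" and md: "(-1 - 2 * int i - int j) mod M = d" unfolding B2_def by auto
    have eq: "int (n - Suc (i + j)) - int i = (-1 - 2 * int i - int j) + int n" using ij by simp
    have "(int (n - Suc (i + j)) - int i) mod M = d" unfolding eq modn[OF n] md ..
    moreover have "(n - Suc (i + j)) + (i) < n" using ij by arith
    ultimately show "(n - Suc (i + j), i) \<in> SS M n d" unfolding SS_def mem_Collect_eq prod.case by blast
  qed
qed (simp_all add: finite_SS finite_B)

lemma U:
  fixes a m y :: int
  assumes m: "m > 0" and cop: "coprime a m"
  shows "\<exists>r0. {r\<in>{0..<m}. m dvd a * r - y} = {r0}"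
proof -
  obtain u v where uv: "u * a + v * m = 1" using bezout_int[of a m] cop by (auto simp: coprime_iff_gcd_eq_1)
  define r0 where "r0 = (u * y) mod m"
  have r0: "r0 \<in> {0..<m}" unfolding r0_def using m by simp
  have d0: "m dvd a * r0 - y"
  proof -
    have "a * r0 - y = a * (u * y) - y - a * (m * ((u * y) div m))"
      unfolding r0_def by (simp add: algebra_simps minus_div_mult_eq_mod[symmetric])
    also have "a * (u * y) - y = (u * a - 1) * y" by (simp add: algebra_simps)
    also have "u * a - 1 = m * (- v)" using uv by (simp add: algebra_simps)
    finally have "a * r0 - y = m * (- v * y - a * ((u * y) div m))" by (simp add: algebra_simps)
    then show ?thesis by simp
  qed
  have uniq: "r = r0" if "r \<in> {0..<m}" "m dvd a * r - y" for r
  proof -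
    have "m dvd (a * r - y) - (a * r0 - y)" using that(2) d0 by (rule dvd_diff)
    then have "m dvd a * (r - r0)" by (simp add: algebra_simps)
    then have "m dvd r - r0" using cop by (simp add: coprime_dvd_mult_right_iff coprime_commute)
    moreover have "\<bar>r - r0\<bar> < m" using that(1) r0 by auto
    ultimately show ?thesis using dvd_imp_le_int[of "r - r0" m] by fastforce
  qed
  show ?thesis using r0 d0 uniq by blast
qed

lemma U3:
  fixes c m y :: int
  assumes m: "m > 0" and cop: "coprime c m"
  shows "card {r\<in>{0..<3*m}. 3*m dvd 3*c*r - y} = (if 3 dvd y then 3 else 0)"
proof (cases "3 dvd y")
  case False
  have "{r\<in>{0..<3*m}. 3*m dvd 3*c*r - y} = {}"
  proof (rule ccontr)
    assume "{r\<in>{0..<3*m}. 3*m dvd 3*c*r - y} \<noteq> {}"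
    then obtain r where "3*m dvd 3*c*r - y" by auto
    then have "3 dvd 3*c*r - y" using dvd_mult_left by blast
    moreover have "3 dvd 3*c*r" by simp
    ultimately have "3 dvd 3*c*r - (3*c*r - y)" by (rule dvd_diff[rotated])
    then have "3 dvd y" by simp
    then show False using False by simp
  qed
  then show ?thesis using False by (simp only: card.empty if_False)
next
  case True
  then obtain y' where y: "y = 3 * y'" by auto
  have iff: "3*m dvd 3*c*r - y \<longleftrightarrow> m dvd c * r - y'" for r
  proof -
    have "3*c*r - y = 3 * (c * r - y')" unfolding y by (simp add: algebra_simps)
    then show ?thesis by (simp only: dvd_mult_cancel_left) simp
  qed
  obtain r0 where r0: "{r\<in>{0..<m}. m dvd c * r - y'} = {r0}" using U[OF m cop, of y'] by blast
  then have r0': "r0 \<in> {0..<m}" "m dvd c * r0 - y'" by auto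
  have "{r\<in>{0..<3*m}. 3*m dvd 3*c*r - y} = {r0, r0 + m, r0 + 2*m}"
  proof (intro set_eqI iffI)
    fix r assume "r \<in> {r\<in>{0..<3*m}. 3*m dvd 3*c*r - y}"
    then have r: "0 \<le> r" "r < 3*m" and dv: "m dvd c * r - y'" using iff by auto
    define q where "q = r div m"
    define s where "s = r mod m"
    have rqs: "r = m * q + s" unfolding q_def s_def by simp
    have s: "s \<in> {0..<m}" unfolding s_def using m by simp
    have e: "c * s - y' = (c * r - y') - m * (c * q)" unfolding rqs by (simp add: algebra_simps)
    have "m dvd (c * r - y') - m * (c * q)" using dv by (rule dvd_diff) simp
    then have "m dvd c * s - y'" unfolding e .
    then have "s = r0" using r0 s by blast
    have "0 \<le> q" unfolding q_def using r m by (simp add: pos_imp_zdiv_nonneg_iff)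
    moreover have "q < 3"
    proof -
      have "0 \<le> s" using s by simp
      then have "m * q < m * 3" using rqs r by linarith
      then show ?thesis using m by simp
    qed
    ultimately have "q = 0 \<or> q = 1 \<or> q = 2" by presburger
    then show "r \<in> {r0, r0 + m, r0 + 2*m}" using rqs \<open>s = r0\<close> by (auto simp: algebra_simps)
  next
    fix r assume "r \<in> {r0, r0 + m, r0 + 2*m}"
    then obtain k where k: "r = r0 + m * k" "k \<in> {0,1,2}"
    proof (elim insertE)
      assume "r = r0" then show ?thesis using that[of 0] by simp
    next
      assume "r = r0 + m" then show ?thesis using that[of 1] by simp
    next
      assume "r = r0 + 2 * m" then show ?thesis using that[of 2] by (simp add: mult.commute)
    qed simp
    have e: "c * r - y' = (c * r0 - y') + m * (c * k)" unfolding k(1) by (simp add: algebra_simps)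
    have "m dvd (c * r0 - y') + m * (c * k)" using r0'(2) by (rule dvd_add) simp
    then have "m dvd c * r - y'" unfolding e .
    moreover have "0 \<le> r" "r < 3 * m" using k r0' m by auto
    ultimately show "r \<in> {r\<in>{0..<3*m}. 3*m dvd 3*c*r - y}" using iff by auto
  qed
  moreover have "card {r0, r0 + m, r0 + 2*m} = 3" using m by simp
  ultimately show ?thesis using True by simp
qed

lemma setconv:
  fixes m x b a2 :: int
  assumes "0 \<le> x" "x < m"
  shows "{r\<in>{0..<m}. (b + a2*r) mod m = x} = {r\<in>{0..<m}. m dvd a2*r - (x - b)}"
proof -
  have "(b + a2*r) mod m = x \<longleftrightarrow> m dvd a2*r - (x - b)" for r
  proof -
    have "(b + a2*r) mod m = x \<longleftrightarrow> (b + a2*r) mod m = x mod m" using assms by simp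
    also have "\<dots> \<longleftrightarrow> m dvd (b + a2*r) - x" by (rule mod_eq_dvd_iff)
    also have "(b + a2*r) - x = a2*r - (x - b)" by simp
    finally show ?thesis .
  qed
  then show ?thesis by simp
qed

lemma NT:
  fixes a1 a2 m x :: int
  assumes m: "m > 0" and g: "gcd (gcd a1 a2) m = 1" and g2: "gcd a2 m \<in> {1, 3}"
    and x: "0 \<le> x" "x < m"
  shows "card {r\<in>{0..<m}. (a1 + a2*r) mod m = x} + card {r\<in>{0..<m}. (0 + a2*r) mod m = x}
       + card {r\<in>{0..<m}. (-a1 + a2*r) mod m = x} = 3"
proof -
  note sc = setconv[OF x]
  show ?thesis
  proof (cases "gcd a2 m = 1")
    case True
    then have cop: "coprime a2 m" by (simp add: coprime_iff_gcd_eq_1)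
    have cd: "card {r\<in>{0..<m}. m dvd a2*r - y} = 1" for y
    proof -
      obtain r0 where "{r\<in>{0..<m}. m dvd a2*r - y} = {r0}" using U[OF m cop, of y] by blast
      then show ?thesis by (simp only:) simp
    qed
    show ?thesis unfolding sc cd by simp
  next
    case False
    then have g3: "gcd a2 m = 3" using g2 by simp
    have "3 dvd m" "3 dvd a2" using gcd_dvd2[of a2 m] gcd_dvd1[of a2 m] unfolding g3 by simp_all
    then obtain m' c where m': "m = 3 * m'" and c: "a2 = 3 * c" by (auto elim!: dvdE)
    have "3 * gcd c m' = 3" using g3 unfolding m' c using gcd_mult_distrib_int[of 3 c m'] by simp
    then have cop: "coprime c m'" by (simp add: coprime_iff_gcd_eq_1)
    have m'0: "m' > 0" using m m' by simp
    have n3: "\<not> 3 dvd a1"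
    proof
      assume "3 dvd a1"
      then have "3 dvd gcd (gcd a1 a2) m" using \<open>3 dvd m\<close> \<open>3 dvd a2\<close> by simp
      then show False using g by simp
    qed
    have cd: "card {r\<in>{0..<m}. m dvd a2*r - y} = (if 3 dvd y then 3 else 0)" for y
      unfolding m' c using U3[OF m'0 cop, of y] by (simp only: mult.assoc)
    have "card {r\<in>{0..<m}. (a1 + a2*r) mod m = x} + card {r\<in>{0..<m}. (0 + a2*r) mod m = x}
       + card {r\<in>{0..<m}. (-a1 + a2*r) mod m = x} = (if 3 dvd (x - a1) then 3 else 0) +
         (if 3 dvd (x - 0) then 3 else 0) + (if 3 dvd (x - - a1) then 3 else 0)"
      unfolding sc cd by simp
    also have "\<dots> = 3" using n3 by presburger
    finally show ?thesis .
  qed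
qed

lemma modlem:
  fixes L m r :: int
  assumes m: "m > 0" and r: "0 \<le> r" "r < m"
  shows "L mod (3*m) = 3*r \<longleftrightarrow> L mod 3 = 0 \<and> (L div 3) mod m = r"
proof (cases "L mod 3 = 0")
  case True
  then obtain q where L: "L = 3 * q" by auto
  have "L mod (3*m) = 3 * (q mod m)" unfolding L by (rule mod_mult_mult1)
  moreover have "L div 3 = q" unfolding L by simp
  ultimately show ?thesis using True by auto
next
  case False
  have "(L mod (3*m)) mod 3 = L mod 3" by (simp add: mod_mod_cancel)
  then have "L mod (3*m) \<noteq> 3*r" using False by auto
  then show ?thesis using False by simp
qed

lemma class_card:
  fixes L :: "'a \<Rightarrow> int" and m b a2 x :: int
  assumes fin: "finite T" and m: "m > 0"
    and K: "\<And>d. 0 \<le> d \<Longrightarrow> d < 3*m \<Longrightarrow> card {p\<in>T. L p mod (3*m) = d} = K"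
  shows "card {p\<in>T. L p mod 3 = 0 \<and> (b + a2 * (L p div 3)) mod m = x}
       = card {r\<in>{0..<m}. (b + a2*r) mod m = x} * K"
proof -
  define R where "R = {r\<in>{0..<m}. (b + a2*r) mod m = x}"
  have eq: "{p\<in>T. L p mod 3 = 0 \<and> (b + a2 * (L p div 3)) mod m = x} = (\<Union>r\<in>R. {p\<in>T. L p mod (3*m) = 3*r})"
  proof (intro set_eqI iffI)
    fix p assume "p \<in> {p\<in>T. L p mod 3 = 0 \<and> (b + a2 * (L p div 3)) mod m = x}"
    then have p: "p \<in> T" "L p mod 3 = 0" "(b + a2 * (L p div 3)) mod m = x" by auto
    define r where "r = (L p div 3) mod m"
    have r: "0 \<le> r" "r < m" unfolding r_def using m by simp_all
    have "L p mod (3*m) = 3*r" using modlem[OF m r, of "L p"] p(2) unfolding r_def by simp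
    moreover have "(b + a2*r) mod m = x"
      using p(3) unfolding r_def by (metis mod_add_right_eq mod_mult_right_eq)
    ultimately show "p \<in> (\<Union>r\<in>R. {p\<in>T. L p mod (3*m) = 3*r})" unfolding R_def using r p(1) by auto
  next
    fix p assume "p \<in> (\<Union>r\<in>R. {p\<in>T. L p mod (3*m) = 3*r})"
    then obtain r where r: "r \<in> R" and p: "p \<in> T" "L p mod (3*m) = 3*r" by auto
    have r': "0 \<le> r" "r < m" "(b + a2*r) mod m = x" using r unfolding R_def by auto
    have "L p mod 3 = 0" "(L p div 3) mod m = r" using modlem[OF m r'(1,2), of "L p"] p(2) by auto
    moreover then have "(b + a2 * (L p div 3)) mod m = x"
      using r'(3) by (metis mod_add_right_eq mod_mult_right_eq)
    ultimately show "p \<in> {p\<in>T. L p mod 3 = 0 \<and> (b + a2 * (L p div 3)) mod m = x}" using p(1) by auto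
  qed
  have "card (\<Union>r\<in>R. {p\<in>T. L p mod (3*m) = 3*r}) = (\<Sum>r\<in>R. card {p\<in>T. L p mod (3*m) = 3*r})"
  proof (rule card_UN_disjoint)
    show "finite R" unfolding R_def by (rule finite_subset[of _ "{0..<m}"]) auto
  qed (auto simp: R_def fin)
  also have "\<dots> = (\<Sum>r\<in>R. K)" by (rule sum.cong) (auto simp: R_def K)
  also have "\<dots> = card R * K" by simp
  finally show ?thesis unfolding eq R_def .
qed

lemma FF_class:
  "FF a1 a2 i j mod m = x \<longleftrightarrow>
    ((int i - int j) mod 3 = 0 \<and> (a1 + a2 * ((int i - int j) div 3)) mod m = x) \<or>
    ((int i + 2 * int j + 1) mod 3 = 0 \<and> (0 + a2 * ((int i + 2 * int j + 1) div 3)) mod m = x) \<or>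
    ((-1 - 2 * int i - int j) mod 3 = 0 \<and> (- a1 + a2 * ((-1 - 2 * int i - int j) div 3)) mod m = x)"
proof -
  define I where "I = int i"
  define J where "J = int j"
  have c: "(I - J) mod 3 = 0 \<and> (I + 2 * J + 1) mod 3 \<noteq> 0 \<and> (-1 - 2 * I - J) mod 3 \<noteq> 0 \<or>
           (I - J) mod 3 \<noteq> 0 \<and> (I + 2 * J + 1) mod 3 = 0 \<and> (-1 - 2 * I - J) mod 3 \<noteq> 0 \<or>
           (I - J) mod 3 \<noteq> 0 \<and> (I + 2 * J + 1) mod 3 \<noteq> 0 \<and> (-1 - 2 * I - J) mod 3 = 0" by presburger
  show ?thesis unfolding FF_def G1_def G2_def I_def[symmetric] J_def[symmetric]
    using c by (elim disjE) (simp_all add: algebra_simps)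
qed

theorem main:
  fixes a1 a2 m :: int and lam :: nat
  assumes m0: "m > 0" and odd: "odd m"
    and g: "gcd (gcd a1 a2) m = 1"
    and g2: "gcd a2 m \<in> {1, 3}"
    and x: "0 \<le> x" "x < m"
  shows "card {(i, j). i + j < 3 * lam * nat m \<and>
             tri (IAP (red m (\<lambda>r. a1 * A1 r + a2 * A2 r)) (timesX m (red m (\<lambda>r. a1 * A1 r + a2 * A2 r)))) i j mod m = x}
       = 3 * card (SS (3*m) (3 * lam * nat m) 0)"
proof -
  define A where "A = (\<lambda>r. a1 * A1 r + a2 * A2 r)"
  define n where "n = 3 * lam * nat m"
  define M where "M = 3 * m"
  define K where "K = card (SS M n 0)"
  define T where "T = {p::nat\<times>nat. fst p + snd p < n}"
  define L0 where "L0 = (\<lambda>p::nat\<times>nat. int (fst p) - int (snd p))"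
  define L1 where "L1 = (\<lambda>p::nat\<times>nat. int (fst p) + 2 * int (snd p) + 1)"
  define L2 where "L2 = (\<lambda>p::nat\<times>nat. -1 - 2 * int (fst p) - int (snd p))"
  have M: "M > 0" "odd M" unfolding M_def using m0 odd by simp_all
  have nM: "n = lam * nat M" unfolding n_def M_def using m0 by (simp add: nat_mult_distrib)
  have dvn: "M dvd int n" unfolding nM using M by simp
  have finT: "finite T"
  proof -
    have "T \<subseteq> {..<n} \<times> {..<n}" unfolding T_def by auto
    then show ?thesis by (rule finite_subset) simp
  qed
  have K0: "card {p\<in>T. L0 p mod (3*m) = d} = K" if "0 \<le> d" "d < 3*m" for d
  proof -
    have "{p\<in>T. L0 p mod (3*m) = d} = SS M n d" unfolding T_def L0_def SS_def M_def by auto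
    then show ?thesis unfolding K_def nM using E_const[OF M, of d lam] that M_def by simp
  qed
  have K1: "card {p\<in>T. L1 p mod (3*m) = d} = K" if "0 \<le> d" "d < 3*m" for d
  proof -
    have "{p\<in>T. L1 p mod (3*m) = d} = B1 M n d" unfolding T_def L1_def B1_def M_def by auto
    then show ?thesis using K0[OF that] card_B1[OF dvn, of d]
      unfolding K_def nM using E_const[OF M, of d lam] that M_def by simp
  qed
  have K2: "card {p\<in>T. L2 p mod (3*m) = d} = K" if "0 \<le> d" "d < 3*m" for d
  proof -
    have "{p\<in>T. L2 p mod (3*m) = d} = B2 M n d" unfolding T_def L2_def B2_def M_def by auto
    then show ?thesis using card_B2[OF dvn, of d]
      unfolding K_def nM using E_const[OF M, of d lam] that M_def by simp
  qed
  define C0 where "C0 = {p\<in>T. L0 p mod 3 = 0 \<and> (a1 + a2 * (L0 p div 3)) mod m = x}"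
  define C1 where "C1 = {p\<in>T. L1 p mod 3 = 0 \<and> (0 + a2 * (L1 p div 3)) mod m = x}"
  define C2 where "C2 = {p\<in>T. L2 p mod 3 = 0 \<and> (- a1 + a2 * (L2 p div 3)) mod m = x}"
  have cC0: "card C0 = card {r\<in>{0..<m}. (a1 + a2*r) mod m = x} * K"
    unfolding C0_def by (rule class_card[OF finT m0 K0])
  have cC1: "card C1 = card {r\<in>{0..<m}. (0 + a2*r) mod m = x} * K"
    unfolding C1_def by (rule class_card[OF finT m0 K1])
  have cC2: "card C2 = card {r\<in>{0..<m}. (- a1 + a2*r) mod m = x} * K"
    unfolding C2_def by (rule class_card[OF finT m0 K2])
  have set_eq: "{(i, j). i + j < n \<and> tri (IAP (red m A) (timesX m (red m A))) i j mod m = x} = C0 \<union> C1 \<union> C2"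
  proof -
    have "tri (IAP (red m A) (timesX m (red m A))) i j mod m = FF a1 a2 i j mod m" for i j
      using tri_F[of m a1 a2 i j] unfolding A_def by (simp add: mod_eq_dvd_iff)
    then show ?thesis unfolding C0_def C1_def C2_def T_def L0_def L1_def L2_def
      by (auto simp: FF_class)
  qed
  have ex: "\<And>I J::int. (I - J) mod 3 = 0 \<Longrightarrow> (I + 2*J + 1) mod 3 = 0 \<Longrightarrow> False"
     "\<And>I J::int. (I - J) mod 3 = 0 \<Longrightarrow> (-1 - 2*I - J) mod 3 = 0 \<Longrightarrow> False"
     "\<And>I J::int. (I + 2*J + 1) mod 3 = 0 \<Longrightarrow> (-1 - 2*I - J) mod 3 = 0 \<Longrightarrow> False"
    by presburger+
  have disj: "C0 \<inter> C1 = {}" "(C0 \<union> C1) \<inter> C2 = {}"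
  proof -
    show "C0 \<inter> C1 = {}"
    proof (rule equals0I)
      fix p assume "p \<in> C0 \<inter> C1"
      then have "L0 p mod 3 = 0" "L1 p mod 3 = 0" unfolding C0_def C1_def by auto
      then show False using ex(1)[of "int (fst p)" "int (snd p)"] unfolding L0_def L1_def by simp
    qed
    show "(C0 \<union> C1) \<inter> C2 = {}"
    proof (rule equals0I)
      fix p assume "p \<in> (C0 \<union> C1) \<inter> C2"
      then have "L0 p mod 3 = 0 \<or> L1 p mod 3 = 0" "L2 p mod 3 = 0" unfolding C0_def C1_def C2_def by auto
      then show False using ex(2,3)[of "int (fst p)" "int (snd p)"] unfolding L0_def L1_def L2_def by auto
    qed
  qed
  have fin: "finite C0" "finite C1" "finite C2" unfolding C0_def C1_def C2_def using finT by simp_all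
  have "card (C0 \<union> C1 \<union> C2) = card C0 + card C1 + card C2"
    using disj fin by (simp add: card_Un_disjoint)
  also have "\<dots> = (card {r\<in>{0..<m}. (a1 + a2*r) mod m = x} + card {r\<in>{0..<m}. (0 + a2*r) mod m = x}
       + card {r\<in>{0..<m}. (-a1 + a2*r) mod m = x}) * K"
    unfolding cC0 cC1 cC2 by (simp add: algebra_simps)
  also have "\<dots> = 3 * K" using NT[OF m0 g g2 x] by simp
  finally show ?thesis using set_eq unfolding K_def n_def M_def A_def by simp
qed

theorem theorem16:
  fixes a1 a2 m :: int and lam :: nat
  assumes "m > 0" and "odd m"
    and "gcd (gcd a1 a2) m = 1"
    and "gcd a2 m \<in> {1, 3}"
  shows "let A = (\<lambda>r. a1 * A1 r + a2 * A2 r)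
         in balanced m (IAP (red m A) (timesX m (red m A))) (3 * lam * nat m)"
proof -
  have "card {(i, j). i + j < 3 * lam * nat m \<and>
             tri (IAP (red m (\<lambda>r. a1 * A1 r + a2 * A2 r)) (timesX m (red m (\<lambda>r. a1 * A1 r + a2 * A2 r)))) i j mod m = x}
      = card {(i, j). i + j < 3 * lam * nat m \<and>
             tri (IAP (red m (\<lambda>r. a1 * A1 r + a2 * A2 r)) (timesX m (red m (\<lambda>r. a1 * A1 r + a2 * A2 r)))) i j mod m = y}"
    if "x \<in> {0..<m}" "y \<in> {0..<m}" for x y
    using main[OF assms, of x] main[OF assms, of y] that by simp
  then show ?thesis unfolding Let_def balanced_def by blast
qed

end
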